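(* Let $\Psi$ be a marked $A_3$ simplicial complex satisfying CCCC. Then the closed stars of two distinct vertices of type $\hat b$ in $\Psi$ either are disjoint, or intersect in exactly one vertex, or intersect in exactly one (closed) edge.
   Context: Let $\Delta$ be the spherical triangle with vertices labelled $\hat a,\hat b,\hat c$, with angle $\pi/3$ at $\hat a$ and $\hat c$ and angle $\pi/2$ at $\hat b$. A marked $A_3$ simplicial complex is a homogeneous $2$-dimensional simplicial complex $\Psi$ in which each $2$-simplex $\sigma$ has an isomorphism $m_\sigma:\sigma\to\Delta$ such that $m_\sigma(x)=m_{\sigma'}(x)$ for all $x\in\sigma\cap\sigma'$; a vertex has type $\hat a,\hat b,\hat c$ according to the label of its image under any marking. $\Psi$ satisfies CCCC if: (1) the link of every vertex of type $\hat a$ or $\hat c$ has girth at least $6$; (2) the link of every vertex of type $\hat b$ is a complete bipartite graph containing an embedded $4$-cycle; (3) (i) every embedded closed edge path $w_1,u_1,w_2,u_2$ with $w_1,w_2$ of type $\hat a$ and $u_1,u_2$ of type $\hat c$ is filled by a vertex $v$ of type $\hat b$ such that $\{v,w_1,u_1\},\{v,u_1,w_2\},\{v,w_2,u_2\},\{v,u_2,w_1\}$ are $2$-simplices; (ii.a) every embedded closed edge path of length $6$ alternating between types $\hat a$ and $\hat b$ is filled by a vertex of type $\hat c$ forming a $2$-simplex with each of its six edges; (ii.b) the same with $\hat a$ and $\hat c$ interchanged. *)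

theory Defs
  imports Main
begin

text \<open>Labels of the vertices of the model spherical triangle Delta:
  angle pi/3 at A (= a-hat) and C (= c-hat), angle pi/2 at B (= b-hat).\<close>
datatype lbl = A | B | C

definition simplicial_complex :: "'v set set \<Rightarrow> bool" where
  "simplicial_complex S \<longleftrightarrow>
     (\<forall>\<sigma>\<in>S. finite \<sigma> \<and> \<sigma> \<noteq> {}) \<and>
     (\<forall>\<sigma>\<in>S. \<forall>\<tau>. \<tau> \<subseteq> \<sigma> \<and> \<tau> \<noteq> {} \<longrightarrow> \<tau> \<in> S)"

definition vertices :: "'v set set \<Rightarrow> 'v set" where
  "vertices S = \<Union>S"

definition two_simplex :: "'v set set \<Rightarrow> 'v set \<Rightarrow> bool" where
  "two_simplex S \<sigma> \<longleftrightarrow> \<sigma> \<in> S \<and> card \<sigma> = 3"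

definition homogeneous_2dim :: "'v set set \<Rightarrow> bool" where
  "homogeneous_2dim S \<longleftrightarrow> simplicial_complex S \<and>
     (\<forall>\<sigma>\<in>S. card \<sigma> \<le> 3 \<and> (\<exists>\<rho>. two_simplex S \<rho> \<and> \<sigma> \<subseteq> \<rho>))"

text \<open>A marking: each 2-simplex sigma gets an isomorphism m sigma onto Delta, i.e. a
  bijection of its vertices onto the labelled vertices of Delta, compatible on
  intersections.\<close>
definition marked_A3 :: "'v set set \<Rightarrow> ('v set \<Rightarrow> 'v \<Rightarrow> lbl) \<Rightarrow> bool" where
  "marked_A3 S m \<longleftrightarrow> homogeneous_2dim S \<and>
     (\<forall>\<sigma>. two_simplex S \<sigma> \<longrightarrow> bij_betw (m \<sigma>) \<sigma> {A, B, C}) \<and>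
     (\<forall>\<sigma> \<sigma>' x. two_simplex S \<sigma> \<and> two_simplex S \<sigma>' \<and> x \<in> \<sigma> \<inter> \<sigma>' \<longrightarrow> m \<sigma> x = m \<sigma>' x)"

definition vtype :: "'v set set \<Rightarrow> ('v set \<Rightarrow> 'v \<Rightarrow> lbl) \<Rightarrow> 'v \<Rightarrow> lbl" where
  "vtype S m v = m (SOME \<sigma>. two_simplex S \<sigma> \<and> v \<in> \<sigma>) v"

definition link_verts :: "'v set set \<Rightarrow> 'v \<Rightarrow> 'v set" where
  "link_verts S v = {w. w \<noteq> v \<and> {v, w} \<in> S}"

definition link_adj :: "'v set set \<Rightarrow> 'v \<Rightarrow> 'v \<Rightarrow> 'v \<Rightarrow> bool" where
  "link_adj S v w u \<longleftrightarrow> two_simplex S {v, w, u}"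

definition is_cycle :: "('a \<Rightarrow> 'a \<Rightarrow> bool) \<Rightarrow> 'a list \<Rightarrow> bool" where
  "is_cycle adj xs \<longleftrightarrow> length xs \<ge> 3 \<and> distinct xs \<and>
     (\<forall>i < length xs. adj (xs ! i) (xs ! ((i + 1) mod length xs)))"

definition girth_ge6 :: "('a \<Rightarrow> 'a \<Rightarrow> bool) \<Rightarrow> bool" where
  "girth_ge6 adj \<longleftrightarrow> (\<forall>xs. is_cycle adj xs \<longrightarrow> length xs \<ge> 6)"

definition complete_bipartite :: "'a set \<Rightarrow> ('a \<Rightarrow> 'a \<Rightarrow> bool) \<Rightarrow> bool" where
  "complete_bipartite V adj \<longleftrightarrow> (\<exists>X Y. X \<inter> Y = {} \<and> X \<union> Y = V \<and>
     (\<forall>x y. adj x y \<longleftrightarrow> (x \<in> X \<and> y \<in> Y) \<or> (x \<in> Y \<and> y \<in> X)))"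

definition closed_edge_path :: "'v set set \<Rightarrow> 'v list \<Rightarrow> bool" where
  "closed_edge_path S xs \<longleftrightarrow> is_cycle (\<lambda>x y. {x, y} \<in> S) xs"

definition CCCC :: "'v set set \<Rightarrow> ('v set \<Rightarrow> 'v \<Rightarrow> lbl) \<Rightarrow> bool" where
  "CCCC S m \<longleftrightarrow>
    \<comment> \<open>(1)\<close>
    (\<forall>v \<in> vertices S. vtype S m v \<in> {A, C} \<longrightarrow> girth_ge6 (link_adj S v)) \<and>
    \<comment> \<open>(2)\<close>
    (\<forall>v \<in> vertices S. vtype S m v = B \<longrightarrow>
        complete_bipartite (link_verts S v) (link_adj S v) \<and>
        (\<exists>xs. length xs = 4 \<and> is_cycle (link_adj S v) xs)) \<and>
    \<comment> \<open>(3)(i)\<close>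
    (\<forall>w1 u1 w2 u2. closed_edge_path S [w1, u1, w2, u2] \<and>
        vtype S m w1 = A \<and> vtype S m w2 = A \<and> vtype S m u1 = C \<and> vtype S m u2 = C \<longrightarrow>
        (\<exists>v. vtype S m v = B \<and> two_simplex S {v, w1, u1} \<and> two_simplex S {v, u1, w2} \<and>
             two_simplex S {v, w2, u2} \<and> two_simplex S {v, u2, w1})) \<and>
    \<comment> \<open>(3)(ii.a)\<close>
    (\<forall>xs. closed_edge_path S xs \<and> length xs = 6 \<and>
        (\<forall>i<6. vtype S m (xs ! i) = (if even i then A else B)) \<longrightarrow>
        (\<exists>v. vtype S m v = C \<and> (\<forall>i<6. two_simplex S {v, xs ! i, xs ! ((i + 1) mod 6)}))) \<and>
    \<comment> \<open>(3)(ii.b)\<close>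
    (\<forall>xs. closed_edge_path S xs \<and> length xs = 6 \<and>
        (\<forall>i<6. vtype S m (xs ! i) = (if even i then C else B)) \<longrightarrow>
        (\<exists>v. vtype S m v = A \<and> (\<forall>i<6. two_simplex S {v, xs ! i, xs ! ((i + 1) mod 6)})))"

definition closed_star :: "'v set set \<Rightarrow> 'v \<Rightarrow> 'v set set" where
  "closed_star S v = {\<tau> \<in> S. \<exists>\<sigma>\<in>S. v \<in> \<sigma> \<and> \<tau> \<subseteq> \<sigma>}"

end

theory Submission
  imports Defs
begin

lemma sub_S: "marked_A3 S m \<Longrightarrow> \<sigma> \<in> S \<Longrightarrow> \<tau> \<subseteq> \<sigma> \<Longrightarrow> \<tau> \<noteq> {} \<Longrightarrow> \<tau> \<in> S"
  unfolding marked_A3_def homogeneous_2dim_def simplicial_complex_def by blast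

lemma ts_S: "two_simplex S \<sigma> \<Longrightarrow> \<sigma> \<in> S"
  unfolding two_simplex_def by blast

lemma vt: assumes "marked_A3 S m" "two_simplex S \<sigma>" "x \<in> \<sigma>"
  shows "vtype S m x = m \<sigma> x"
proof -
  have ex: "\<exists>\<sigma>. two_simplex S \<sigma> \<and> x \<in> \<sigma>" using assms by blast
  define \<sigma>0 where "\<sigma>0 = (SOME \<sigma>. two_simplex S \<sigma> \<and> x \<in> \<sigma>)"
  have "two_simplex S \<sigma>0 \<and> x \<in> \<sigma>0" unfolding \<sigma>0_def by (rule someI_ex[OF ex])
  then show ?thesis using assms unfolding vtype_def \<sigma>0_def[symmetric] marked_A3_def by blast
qed

lemma tri: assumes "marked_A3 S m" "two_simplex S {x,y,z}"
  shows "x \<noteq> y \<and> y \<noteq> z \<and> x \<noteq> z \<and> vtype S m x \<noteq> vtype S m y \<and> vtype S m y \<noteq> vtype S m z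
     \<and> vtype S m x \<noteq> vtype S m z \<and> {vtype S m x, vtype S m y, vtype S m z} = {A,B,C}"
proof -
  have c: "card {x,y,z} = 3" using assms(2) unfolding two_simplex_def by blast
  have d: "x \<noteq> y \<and> y \<noteq> z \<and> x \<noteq> z"
  proof (rule ccontr)
    assume "\<not> ?thesis"
    then have "card {x,y,z} \<le> 2" by (auto simp: card_insert_if)
    with c show False by simp
  qed
  have b: "bij_betw (m {x,y,z}) {x,y,z} {A,B,C}" using assms unfolding marked_A3_def by blast
  have e: "vtype S m x = m {x,y,z} x" "vtype S m y = m {x,y,z} y" "vtype S m z = m {x,y,z} z"
    using vt[OF assms] by auto
  have i: "inj_on (m {x,y,z}) {x,y,z}" and im: "m {x,y,z} ` {x,y,z} = {A,B,C}"
    using b unfolding bij_betw_def by auto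
  show ?thesis using d i im unfolding e by (auto simp: inj_on_def)
qed

lemma card3: assumes "finite \<rho>" "card \<rho> = 3" "x \<in> \<rho>" "y \<in> \<rho>" "x \<noteq> y"
  shows "\<exists>z. \<rho> = {x,y,z} \<and> z \<noteq> x \<and> z \<noteq> y"
proof -
  have "card (\<rho> - {x,y}) = 1" using assms by (simp add: card_Diff_subset)
  then obtain z where "\<rho> - {x,y} = {z}" by (rule card_1_singletonE)
  then show ?thesis using assms by blast
qed

lemma edge: assumes "marked_A3 S m" "{x,y} \<in> S" "x \<noteq> y"
  shows "\<exists>z. two_simplex S {x,y,z}"
proof -
  obtain \<rho> where r: "two_simplex S \<rho>" "{x,y} \<subseteq> \<rho>"
    using assms unfolding marked_A3_def homogeneous_2dim_def by blast
  have "finite \<rho>" using r assms(1) unfolding marked_A3_def homogeneous_2dim_def simplicial_complex_def two_simplex_def by blast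
  then obtain z where "\<rho> = {x,y,z}" using card3[of \<rho> x y] r assms(3) unfolding two_simplex_def by auto
  then show ?thesis using r by blast
qed

lemma edge_t: assumes "marked_A3 S m" "{x,y} \<in> S" "x \<noteq> y"
  shows "vtype S m x \<noteq> vtype S m y"
  using edge[OF assms] tri[OF assms(1)] by blast

lemma all4: "(\<forall>i<(4::nat). P i) = (P 0 \<and> P 1 \<and> P 2 \<and> P 3)"
  by (auto simp: numeral_eq_Suc less_Suc_eq)

lemma cyc4: "is_cycle adj [a,b,c,d] = (distinct [a,b,c,d] \<and> adj a b \<and> adj b c \<and> adj c d \<and> adj d a)"
proof -
  have a4: "(\<forall>i<Suc(Suc(Suc(Suc 0))). P i) = (P 0 \<and> P 1 \<and> P 2 \<and> P 3)" for P
    by (auto simp: less_Suc_eq numeral_eq_Suc)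
  show ?thesis unfolding is_cycle_def by (simp add: a4)
qed

lemma sub2: "\<tau> \<subseteq> {x,y} \<Longrightarrow> \<tau> \<noteq> {} \<Longrightarrow> \<tau> = {x} \<or> \<tau> = {y} \<or> \<tau> = {x,y}"
  by auto



lemma CC1: "CCCC S m \<Longrightarrow> v \<in> vertices S \<Longrightarrow> vtype S m v \<in> {A, C} \<Longrightarrow> girth_ge6 (link_adj S v)"
  unfolding CCCC_def by (drule conjunct1) blast

lemma CC2: "CCCC S m \<Longrightarrow> v \<in> vertices S \<Longrightarrow> vtype S m v = B \<Longrightarrow>
        complete_bipartite (link_verts S v) (link_adj S v) \<and>
        (\<exists>xs. length xs = 4 \<and> is_cycle (link_adj S v) xs)"
  unfolding CCCC_def by (drule conjunct2, drule conjunct1) blast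

lemma CC3: "CCCC S m \<Longrightarrow> closed_edge_path S [w1, u1, w2, u2] \<Longrightarrow>
        vtype S m w1 = A \<Longrightarrow> vtype S m w2 = A \<Longrightarrow> vtype S m u1 = C \<Longrightarrow> vtype S m u2 = C \<Longrightarrow>
        (\<exists>v. vtype S m v = B \<and> two_simplex S {v, w1, u1} \<and> two_simplex S {v, u1, w2} \<and>
             two_simplex S {v, w2, u2} \<and> two_simplex S {v, u2, w1})"
  unfolding CCCC_def by (drule conjunct2, drule conjunct2, drule conjunct1) blast

lemma cycle0: assumes "length xs = 4" "is_cycle adj xs" shows "adj (xs!0) (xs!1)"
proof -
  have "\<forall>i<4. adj (xs!i) (xs!((i+1) mod 4))" using assms unfolding is_cycle_def by simp
  then show ?thesis by (metis One_nat_def add_0 mod_less one_less_numeral_iff semiring_norm(76) zero_less_numeral)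
qed

lemma cb: assumes mk: "marked_A3 S m" and cc: "CCCC S m" and vB: "vtype S m v = B"
  and vV: "v \<in> vertices S" and ex: "{v,x} \<in> S" and ey: "{v,y} \<in> S" and xv: "x \<noteq> v" and yv: "y \<noteq> v"
  and nxy: "vtype S m x \<noteq> vtype S m y"
  shows "two_simplex S {v,x,y}"
proof -
  from CC2[OF cc vV vB] obtain X Y xs where XY: "X \<inter> Y = {}" "X \<union> Y = link_verts S v"
     "\<forall>p q. link_adj S v p q \<longleftrightarrow> (p\<in>X\<and>q\<in>Y) \<or> (p\<in>Y\<and>q\<in>X)"
    and xs: "length xs = 4" "is_cycle (link_adj S v) xs"
    unfolding CCCC_def complete_bipartite_def by blast
  have "link_adj S v (xs!0) (xs!1)" using cycle0[OF xs] .
  then obtain p q where pq: "p\<in>X" "q\<in>Y" using XY(3) by blast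
  have tx: "vtype S m x \<noteq> B" using edge_t[OF mk ex] xv vB by metis
  have ty: "vtype S m y \<noteq> B" using edge_t[OF mk ey] yv vB by metis
  have xl: "x \<in> link_verts S v" and yl: "y \<in> link_verts S v"
    using ex ey xv yv unfolding link_verts_def by auto
  show ?thesis
  proof (cases "(x\<in>X\<and>y\<in>Y) \<or> (x\<in>Y\<and>y\<in>X)")
    case True then have "link_adj S v x y" using XY(3) by blast
    then show ?thesis by (simp add: link_adj_def)
  next
    case False
    then have "(x\<in>X\<and>y\<in>X) \<or> (x\<in>Y\<and>y\<in>Y)" using xl yl XY(2) by blast
    then show ?thesis
    proof
      assume "x\<in>X\<and>y\<in>X"
      then have "two_simplex S {v,x,q}" "two_simplex S {v,y,q}" using XY(3) pq unfolding link_adj_def by blast+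
      then have "vtype S m q \<noteq> vtype S m x" "vtype S m q \<noteq> vtype S m y" "vtype S m q \<noteq> B"
        using tri[OF mk] vB by metis+
      then show ?thesis using tx ty nxy by (cases "vtype S m x"; cases "vtype S m y"; cases "vtype S m q") auto
    next
      assume "x\<in>Y\<and>y\<in>Y"
      then have "two_simplex S {v,x,p}" "two_simplex S {v,y,p}" using XY(3) pq unfolding link_adj_def by blast+
      then have "vtype S m p \<noteq> vtype S m x" "vtype S m p \<noteq> vtype S m y" "vtype S m p \<noteq> B"
        using tri[OF mk] vB by metis+
      then show ?thesis using tx ty nxy by (cases "vtype S m x"; cases "vtype S m y"; cases "vtype S m p") auto
    qed
  qed
qed

lemma gir: assumes mk: "marked_A3 S m" and cc: "CCCC S m" and t: "two_simplex S {c,a,b}"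
  and cB: "vtype S m c \<noteq> B" and cy: "is_cycle (link_adj S c) xs" and l: "length xs = 4"
  shows False
proof -
  have "c \<in> vertices S" using ts_S[OF t] unfolding vertices_def by blast
  moreover have "vtype S m c \<in> {A, C}" using cB by (cases "vtype S m c") auto
  ultimately have "girth_ge6 (link_adj S c)" using CC1[OF cc] by blast
  then show False using cy l unfolding girth_ge6_def by fastforce
qed

lemma fill: assumes mk: "marked_A3 S m" and cc: "CCCC S m"
  and p: "closed_edge_path S [x1,y1,x2,y2]"
  and t1: "vtype S m x1 = vtype S m x2" and t2: "vtype S m y1 = vtype S m y2"
  and b1: "vtype S m x1 \<noteq> B" and b2: "vtype S m y1 \<noteq> B" and d: "vtype S m x1 \<noteq> vtype S m y1"
  shows "\<exists>u. vtype S m u = B \<and> two_simplex S {u,x1,y1} \<and> two_simplex S {u,y1,x2}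
            \<and> two_simplex S {u,x2,y2} \<and> two_simplex S {u,y2,x1}"
proof (cases "vtype S m x1 = A")
  case True
  then have "vtype S m y1 = C" using b2 d by (cases "vtype S m y1") auto
  then show ?thesis using CC3[OF cc p] t1 t2 True by simp
next
  case False
  then have x1C: "vtype S m x1 = C" using b1 by (cases "vtype S m x1") auto
  then have y1A: "vtype S m y1 = A" using b2 d by (cases "vtype S m y1") auto
  have p2: "closed_edge_path S [y1,x1,y2,x2]" using p unfolding closed_edge_path_def cyc4
    by (auto simp: insert_commute)
  obtain u where "vtype S m u = B \<and> two_simplex S {u,y1,x1} \<and> two_simplex S {u,x1,y2}
             \<and> two_simplex S {u,y2,x2} \<and> two_simplex S {u,x2,y1}"
    using CC3[OF cc p2] t1 t2 x1C y1A by force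
  then show ?thesis by (auto simp: insert_commute)
qed

lemma key: assumes mk: "marked_A3 S m" and cc: "CCCC S m"
  and vB: "vtype S m v = B" and wB: "vtype S m w = B"
  and vV: "v \<in> vertices S" and wV: "w \<in> vertices S" and vw: "v \<noteq> w" and a12: "a1 \<noteq> a2"
  and e1: "{v,a1} \<in> S" and e2: "{v,a2} \<in> S" and e3: "{w,a1} \<in> S" and e4: "{w,a2} \<in> S"
  and n1: "a1 \<noteq> v" and n2: "a2 \<noteq> v" and n3: "a1 \<noteq> w" and n4: "a2 \<noteq> w"
  and tt: "vtype S m a1 = vtype S m a2"
  shows False
proof -
  have tB: "vtype S m a1 \<noteq> B" using edge_t[OF mk e1] n1 vB by metis
  obtain c where c1: "two_simplex S {v,a1,c}" using edge[OF mk e1] n1 by metis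
  have ct: "vtype S m c \<noteq> B" "vtype S m c \<noteq> vtype S m a1" "c \<noteq> v" "c \<noteq> a1"
    using tri[OF mk c1] vB by auto
  have "{v,c} \<in> S" using sub_S[OF mk ts_S[OF c1], of "{v,c}"] by auto
  then have c2: "two_simplex S {v,a2,c}" using cb[OF mk cc vB vV e2] n2 ct tt by auto
  obtain c' where c'1: "two_simplex S {w,a1,c'}" using edge[OF mk e3] n3 by metis
  have c't: "vtype S m c' \<noteq> B" "vtype S m c' \<noteq> vtype S m a1" "c' \<noteq> w" "c' \<noteq> a1"
    using tri[OF mk c'1] wB by auto
  have "{w,c'} \<in> S" using sub_S[OF mk ts_S[OF c'1], of "{w,c'}"] by auto
  then have c'2: "two_simplex S {w,a2,c'}" using cb[OF mk cc wB wV e4] n4 c't tt by auto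
  have cc': "vtype S m c = vtype S m c'" using ct c't tB
    by (cases "vtype S m c"; cases "vtype S m c'"; cases "vtype S m a1") auto
  show False
  proof (cases "c = c'")
    case True
    have cyc: "is_cycle (link_adj S c) [a1,v,a2,w]"
      unfolding cyc4 link_adj_def using c1 c2 c'1 c'2 True vw a12 n1 n2 n3 n4
      by (auto simp: insert_commute)
    have ts: "two_simplex S {c,v,a1}" using c1 by (simp add: insert_commute)
    show False by (rule gir[OF mk cc ts ct(1) cyc]) simp
  next
    case False
    have ed: "{a1,c} \<in> S" "{c,a2} \<in> S" "{a2,c'} \<in> S" "{c',a1} \<in> S"
      using sub_S[OF mk ts_S[OF c1], of "{a1,c}"] sub_S[OF mk ts_S[OF c2], of "{c,a2}"]
        sub_S[OF mk ts_S[OF c'1], of "{c',a1}"] sub_S[OF mk ts_S[OF c'2], of "{a2,c'}"] by auto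
    have "closed_edge_path S [a1,c,a2,c']"
      unfolding closed_edge_path_def cyc4 using ed False a12 ct c't tt by auto
    then obtain u where u: "vtype S m u = B" "two_simplex S {u,a1,c}" "two_simplex S {u,c,a2}"
      "two_simplex S {u,a2,c'}" "two_simplex S {u,c',a1}"
      using fill[OF mk cc _ tt cc' tB] ct by metis
    have ua: "u \<noteq> a1" "u \<noteq> a2" using u(1) tB tt by auto
    show False
    proof (cases "u = v")
      case False
      have cyc: "is_cycle (link_adj S c) [a1,v,a2,u]"
        unfolding cyc4 link_adj_def using c1 c2 u False a12 n1 n2 ua
        by (auto simp: insert_commute)
      have ts: "two_simplex S {c,v,a1}" using c1 by (simp add: insert_commute)
    show False by (rule gir[OF mk cc ts ct(1) cyc]) simp
    next
      case True
      then have uw: "u \<noteq> w" using vw by auto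
      have cyc: "is_cycle (link_adj S c') [a1,w,a2,u]"
        unfolding cyc4 link_adj_def using c'1 c'2 u uw a12 n3 n4 ua
        by (auto simp: insert_commute)
      have ts: "two_simplex S {c',w,a1}" using c'1 by (simp add: insert_commute)
      show False by (rule gir[OF mk cc ts c't(1) cyc]) simp
    qed
  qed
qed


theorem lemma5p5:
  fixes S :: "'v set set" and m :: "'v set \<Rightarrow> 'v \<Rightarrow> lbl" and v w :: 'v
  assumes "marked_A3 S m" and "CCCC S m"
    and "v \<in> vertices S" and "w \<in> vertices S" and "v \<noteq> w"
    and "vtype S m v = B" and "vtype S m w = B"
  shows "closed_star S v \<inter> closed_star S w = {} \<or>
         (\<exists>x. closed_star S v \<inter> closed_star S w = {{x}}) \<or>
         (\<exists>x y. x \<noteq> y \<and> {x, y} \<in> S \<and> closed_star S v \<inter> closed_star S w = {{x}, {y}, {x, y}})"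
proof -
  note mk = assms(1) and cc = assms(2) and vV = assms(3) and wV = assms(4) and vw = assms(5)
    and vB = assms(6) and wB = assms(7)
  define I where "I = closed_star S v \<inter> closed_star S w"
  define N where "N = {x. x \<noteq> v \<and> x \<noteq> w \<and> {v,x} \<in> S \<and> {w,x} \<in> S}"
  have ne: "\<tau> \<noteq> {}" if "\<tau> \<in> S" for \<tau>
  proof -
    have "simplicial_complex S" using mk unfolding marked_A3_def homogeneous_2dim_def by simp
    then show ?thesis using that unfolding simplicial_complex_def by blast
  qed
  have IS: "\<tau> \<in> S" if "\<tau> \<in> I" for \<tau> using that unfolding I_def closed_star_def by blast
  have nvw: "{v,w} \<notin> S" using edge_t[OF mk _ vw] vB wB by auto
  have IN: "\<tau> \<subseteq> N" if "\<tau> \<in> I" for \<tau>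
  proof
    fix x assume x: "x \<in> \<tau>"
    obtain \<sigma> \<sigma>' where s: "\<tau> \<in> S" "\<sigma> \<in> S" "v \<in> \<sigma>" "\<tau> \<subseteq> \<sigma>" "\<sigma>' \<in> S" "w \<in> \<sigma>'" "\<tau> \<subseteq> \<sigma>'"
      using \<open>\<tau> \<in> I\<close> unfolding I_def closed_star_def by blast
    have "x \<noteq> v"
    proof
      assume "x = v" then have "{v,w} \<subseteq> \<sigma>'" using s x by blast
      then show False using sub_S[OF mk s(5)] nvw by blast
    qed
    moreover have "x \<noteq> w"
    proof
      assume "x = w" then have "{v,w} \<subseteq> \<sigma>" using s x by blast
      then show False using sub_S[OF mk s(2)] nvw by blast
    qed
    moreover have "{v,x} \<in> S" using sub_S[OF mk s(2), of "{v,x}"] s x by blast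
    moreover have "{w,x} \<in> S" using sub_S[OF mk s(5), of "{w,x}"] s x by blast
    ultimately show "x \<in> N" unfolding N_def by blast
  qed
  have NB: "vtype S m x \<noteq> B" if "x \<in> N" for x
    using that edge_t[OF mk, of v x] vB unfolding N_def by auto
  have Nd: "vtype S m x \<noteq> vtype S m y" if "x \<in> N" "y \<in> N" "x \<noteq> y" for x y
  proof
    assume eq: "vtype S m x = vtype S m y"
    have h: "{v,x} \<in> S" "{v,y} \<in> S" "{w,x} \<in> S" "{w,y} \<in> S" "x \<noteq> v" "y \<noteq> v" "x \<noteq> w" "y \<noteq> w"
      using that(1,2) unfolding N_def by auto
    show False by (rule key[OF mk cc vB wB vV wV vw that(3) h eq])
  qed
  have sing: "{x} \<in> I" if "x \<in> N" for x
  proof -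
    have "{v,x} \<in> S" "{w,x} \<in> S" using that unfolding N_def by auto
    moreover have "{x} \<in> S" using sub_S[OF mk \<open>{v,x} \<in> S\<close>, of "{x}"] by blast
    ultimately show ?thesis unfolding I_def closed_star_def by blast
  qed
  show ?thesis
  proof (cases "N = {}")
    case True
    then have "I = {}" using IN ne IS by blast
    then show ?thesis unfolding I_def by blast
  next
    case False
    then obtain x where x: "x \<in> N" by blast
    show ?thesis
    proof (cases "N = {x}")
      case True
      have "I = {{x}}"
      proof
        show "I \<subseteq> {{x}}"
        proof
          fix \<tau> assume "\<tau> \<in> I"
          then have "\<tau> \<subseteq> {x}" "\<tau> \<noteq> {}" using IN ne IS True by blast+
          then show "\<tau> \<in> {{x}}" by blast
        qed
        show "{{x}} \<subseteq> I" using sing[OF x] by simp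
      qed
      then show ?thesis unfolding I_def by (intro disjI2 disjI1 exI[of _ x])
    next
      case False
      then obtain y where y: "y \<in> N" "y \<noteq> x" using x by blast
      have Nxy: "N = {x,y}"
      proof
        show "N \<subseteq> {x,y}"
        proof
          fix z assume z: "z \<in> N"
          show "z \<in> {x,y}"
          proof (rule ccontr)
            assume "z \<notin> {x,y}"
            then have "vtype S m z \<noteq> vtype S m x" "vtype S m z \<noteq> vtype S m y" using Nd[OF z x] Nd[OF z y(1)] by auto
            moreover have "vtype S m x \<noteq> vtype S m y" using Nd[OF x y(1)] y(2) by auto
            ultimately show False using NB[OF x] NB[OF y(1)] NB[OF z]
              by (cases "vtype S m x"; cases "vtype S m y"; cases "vtype S m z") auto
          qed
        qed
        show "{x,y} \<subseteq> N" using x y by blast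
      qed
      have xv: "{v,x} \<in> S" "{v,y} \<in> S" "{w,x} \<in> S" "{w,y} \<in> S" "x \<noteq> v" "y \<noteq> v" "x \<noteq> w" "y \<noteq> w"
        using x y unfolding N_def by auto
      have nxy: "vtype S m x \<noteq> vtype S m y" using Nd[OF x y(1)] y(2) by auto
      have tv: "two_simplex S {v,x,y}" by (rule cb[OF mk cc vB vV xv(1,2) xv(5,6) nxy])
      have tw: "two_simplex S {w,x,y}" by (rule cb[OF mk cc wB wV xv(3,4) xv(7,8) nxy])
      have xyS: "{x,y} \<in> S" using sub_S[OF mk ts_S[OF tv], of "{x,y}"] by blast
      have "I = {{x},{y},{x,y}}"
      proof
        show "I \<subseteq> {{x},{y},{x,y}}"
        proof
          fix \<tau> assume "\<tau> \<in> I"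
          then have "\<tau> \<subseteq> {x,y}" "\<tau> \<noteq> {}" using IN ne IS Nxy by blast+
          from sub2[OF this] show "\<tau> \<in> {{x},{y},{x,y}}" by simp
        qed
        have "{x,y} \<in> closed_star S v" unfolding closed_star_def
          using xyS ts_S[OF tv] by blast
        moreover have "{x,y} \<in> closed_star S w" unfolding closed_star_def
          using xyS ts_S[OF tw] by blast
        ultimately have "{x,y} \<in> I" unfolding I_def by blast
        then show "{{x},{y},{x,y}} \<subseteq> I" using sing[OF x] sing[OF y(1)] by simp
      qed
      then have "\<exists>a b. a \<noteq> b \<and> {a,b} \<in> S \<and> I = {{a},{b},{a,b}}"
        using xyS y(2) by (intro exI[of _ x] exI[of _ y]) auto
      then show ?thesis unfolding I_def by (rule disjI2[OF disjI2])
    qed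
  qed
qed

end
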